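(* Let $i\in\mathbb{N}_0$ and let $\alpha,\beta,\epsilon\in\mathbb{C}$. Then $$F^{1:1;2}_{1:0;1}\left[\begin{matrix}\alpha: & \epsilon\,; & \beta-\epsilon,\ 1+\alpha-2\beta+\epsilon+i\,;\\ \beta: & -\,; & 1+\alpha-\beta+\epsilon+i\,;\end{matrix}\ \tfrac12,\ \tfrac12\right] =\frac{2^{i+\alpha-2\beta+2\epsilon}\,\Gamma(\beta-\epsilon-i)\,\Gamma(1+\alpha-\beta+\epsilon+i)}{\Gamma(\beta-\epsilon)\,\Gamma(1+\alpha-2\beta+2\epsilon+i)}\sum_{r=0}^{i}(-1)^r\binom{i}{r}\frac{\Gamma\!\left(\epsilon-\beta+\frac{1+\alpha+i+r}{2}\right)}{\Gamma\!\left(\frac{1+\alpha-i+r}{2}\right)}$$ and $$F^{1:1;2}_{1:0;1}\left[\begin{matrix}\alpha: & \epsilon\,; & \beta-\epsilon,\ 1+\alpha-2\beta+\epsilon-i\,;\\ \beta: & -\,; & 1+\alpha-\beta+\epsilon-i\,;\end{matrix}\ \tfrac12,\ \tfrac12\right] =\frac{2^{-i+\alpha-2\beta+2\epsilon}\,\Gamma(1+\alpha-\beta+\epsilon-i)}{\Gamma(1+\alpha-2\beta+2\epsilon-i)}\sum_{r=0}^{i}\binom{i}{r}\frac{\Gamma\!\left(\epsilon-\beta+\frac{1+\alpha-i+r}{2}\right)}{\Gamma\!\left(\frac{1+\alpha-i+r}{2}\right)}.$$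
   Context: For $\lambda\in\mathbb{C}$ and $n\in\mathbb{N}_0$, $(\lambda)_0=1$ and $(\lambda)_n=\lambda(\lambda+1)\cdots(\lambda+n-1)$; $\Gamma$ is Euler's Gamma function and $\binom{i}{r}$ the binomial coefficient. The (generalized) Kampé de Fériet function is defined by $$F^{H:A;B}_{G:C;D}\left[\begin{matrix}(h_H): & (a_A)\,; & (b_B)\,;\\ (g_G): & (c_C)\,; & (d_D)\,;\end{matrix}\ x,\ y\right]=\sum_{m=0}^\infty\sum_{n=0}^\infty\frac{\prod_{j=1}^H(h_j)_{m+n}\prod_{j=1}^A(a_j)_m\prod_{j=1}^B(b_j)_n}{\prod_{j=1}^G(g_j)_{m+n}\prod_{j=1}^C(c_j)_m\prod_{j=1}^D(d_j)_n}\frac{x^m}{m!}\frac{y^n}{n!},$$ where a dash "$-$" denotes an empty list of parameters (empty products equal $1$). Parameters are tacitly assumed to be such that the double series converges, no denominator parameter is a non-positive integer, and all Gamma values appearing are finite. *)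

theory Defs
  imports "HOL-Analysis.Analysis"
begin

text \<open>General (generalized) Kampe de Feriet function. The parameter lists
  hs, gs, as, cs, bs, ds correspond to (h_H), (g_G), (a_A), (c_C), (b_B), (d_D);
  an empty list stands for a dash.\<close>

definition kdf_term ::
  "complex list \<Rightarrow> complex list \<Rightarrow> complex list \<Rightarrow> complex list \<Rightarrow>
   complex list \<Rightarrow> complex list \<Rightarrow> complex \<Rightarrow> complex \<Rightarrow> nat \<times> nat \<Rightarrow> complex" where
  "kdf_term hs gs as cs bs ds x y = (\<lambda>(m, n).
     (prod_list (map (\<lambda>h. pochhammer h (m + n)) hs)
      * prod_list (map (\<lambda>a. pochhammer a m) as)
      * prod_list (map (\<lambda>b. pochhammer b n) bs))
     / (prod_list (map (\<lambda>g. pochhammer g (m + n)) gs)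
      * prod_list (map (\<lambda>c. pochhammer c m) cs)
      * prod_list (map (\<lambda>d. pochhammer d n) ds))
     * (x ^ m / fact m) * (y ^ n / fact n))"

definition kdf ::
  "complex list \<Rightarrow> complex list \<Rightarrow> complex list \<Rightarrow> complex list \<Rightarrow>
   complex list \<Rightarrow> complex list \<Rightarrow> complex \<Rightarrow> complex \<Rightarrow> complex" where
  "kdf hs gs as cs bs ds x y = infsum (kdf_term hs gs as cs bs ds x y) UNIV"

end

theory Submission
  imports Defs "HOL-Complex_Analysis.Complex_Analysis"
begin

lemma binom_half:
  fixes a t :: real
  assumes "0 \<le> t" "t \<le> 1"
  shows "(\<lambda>N. pochhammer a N / fact N * (t/2)^N) sums ((1 - t/2) powr (-a))"
proof -
  have "\<bar>-t/2\<bar> < 1" using assms by auto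
  from gen_binomial_real[OF this, of "-a"]
  have "(\<lambda>N. ((-a) gchoose N) * (-t/2)^N) sums ((1 + -t/2) powr (-a))" .
  moreover have "((-a) gchoose N) * (-t/2)^N = pochhammer a N / fact N * (t/2)^N" for N
  proof -
    have "((-a) gchoose N) * (-t/2)^N = ((-1)^N * (-1)^N) * (pochhammer a N / fact N * (t/2)^N)"
      by (simp add: gbinomial_pochhammer power_minus[of "t/2"] mult_ac)
    also have "(-1::real)^N * (-1)^N = 1" by (simp flip: power_add)
    finally show ?thesis by simp
  qed
  ultimately show ?thesis by simp
qed

definition wB :: "real \<Rightarrow> real \<Rightarrow> real \<Rightarrow> real" where
  "wB x y t = t powr (x - 1) * (1 - t) powr (y - 1)"

lemma I1:
  fixes a x y :: real
  assumes a: "a > 0" and x: "x > 1" and y: "y > 1"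
  defines "f \<equiv> (\<lambda>t. wB x y t * (1 - t/2) powr (-a))"
  shows "(\<lambda>N. pochhammer a N / (fact N * 2^N) * Beta (x + of_nat N) y) sums integral {0..1} f"
    and "f integrable_on {0..1}"
proof -
  define c where "c = (\<lambda>N. pochhammer a N / (fact N * 2^N) :: real)"
  have c_nonneg: "c N \<ge> 0" for N unfolding c_def using a by (intro divide_nonneg_pos pochhammer_nonneg) auto
  have contf: "continuous_on {0..1} f"
    unfolding f_def wB_def using x y
    by (intro continuous_intros continuous_on_powr') (auto intro!: continuous_intros)
  show fint: "f integrable_on {0..1}" by (rule integrable_continuous_interval[OF contf])
  define fk where "fk = (\<lambda>k t. \<Sum>N<k. c N * (t^N * wB x y t))"
  have ser: "(\<lambda>N. c N * (t^N * wB x y t)) sums f t" if "t \<in> {0..1}" for t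
  proof -
    have "(\<lambda>N. pochhammer a N / fact N * (t/2)^N) sums ((1 - t/2) powr (-a))"
      using that by (intro binom_half) auto
    hence "(\<lambda>N. pochhammer a N / fact N * (t/2)^N * wB x y t) sums ((1 - t/2) powr (-a) * wB x y t)"
      by (rule sums_mult2)
    moreover have "pochhammer a N / fact N * (t/2)^N * wB x y t = c N * (t^N * wB x y t)" for N
      by (simp add: c_def power_divide)
    ultimately show ?thesis by (simp add: f_def mult_ac)
  qed
  have wB_nonneg: "wB x y t \<ge> 0" if "t \<in> {0..1}" for t
    using that by (auto simp: wB_def)
  have int_k: "(fk k has_integral (\<Sum>N<k. c N * Beta (x + of_nat N) y)) {0..1}" for k
    unfolding fk_def
  proof (intro has_integral_sum finite_lessThan has_integral_mult_right)
    fix N :: nat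
    have B: "((\<lambda>t. t powr ((x + of_nat N) - 1) * (1 - t) powr (y - 1)) has_integral Beta (x + of_nat N) y) {0..1}"
      using x y by (intro has_integral_Beta_real) auto
    show "((\<lambda>t. t ^ N * wB x y t) has_integral Beta (x + of_nat N) y) {0..1}"
    proof (rule has_integral_cong[THEN iffD1, OF _ B])
      fix t :: real assume t: "t \<in> {0..1}"
      show "t powr ((x + of_nat N) - 1) * (1 - t) powr (y - 1) = t ^ N * wB x y t"
      proof (cases "t = 0")
        case True thus ?thesis by (simp add: wB_def)
      next
        case False
        with t have "t > 0" by auto
        thus ?thesis by (simp add: wB_def powr_add powr_realpow[symmetric] powr_diff algebra_simps)
      qed
    qed
  qed
  have dc: "(\<lambda>k. integral {0..1} (fk k)) \<longlonglongrightarrow> integral {0..1} f"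
  proof (rule dominated_convergence(2)[where h = f])
    show "fk k integrable_on {0..1}" for k using int_k by blast
    show "f integrable_on {0..1}" by (rule fint)
    show "norm (fk k t) \<le> f t" if "t \<in> {0..1}" for k t
    proof -
      have nn: "0 \<le> c N * (t^N * wB x y t)" for N
        using that c_nonneg wB_nonneg[OF that] by auto
      have "norm (fk k t) = fk k t" unfolding fk_def using nn by (simp add: sum_nonneg)
      also have "\<dots> \<le> f t" unfolding fk_def
        using sum_le_suminf[OF sums_summable[OF ser[OF that]], of "{..<k}"] nn sums_unique[OF ser[OF that]]
        by simp
      finally show ?thesis .
    qed
    show "(\<lambda>k. fk k t) \<longlonglongrightarrow> f t" if "t \<in> {0..1}" for t
      using ser[OF that] unfolding fk_def sums_def .
  qed
  have "integral {0..1} (fk k) = (\<Sum>N<k. c N * Beta (x + of_nat N) y)" for k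
    using int_k by (rule integral_unique)
  with dc show "(\<lambda>N. pochhammer a N / (fact N * 2^N) * Beta (x + of_nat N) y) sums integral {0..1} f"
    unfolding sums_def c_def by simp
qed

lemma I2_pt:
  fixes a x y s :: real
  assumes s: "0 < s" "s < 1"
  shows "2 / (1+s)^2 * (wB x y (2 * s/(1+s)) * (1 - (2 * s/(1+s))/2) powr (-a))
       = 2 powr x * (s powr (x-1) * (1-s) powr (y-1) * (1+s) powr (a-x-y))"
proof -
  have u: "1 + s > 0" using s by auto
  have e1: "1 - 2 * s/(1+s) = (1-s)/(1+s)" using u by (simp add: field_simps)
  have e2: "1 - (2 * s/(1+s))/2 = 1/(1+s)" using u by (simp add: field_simps)
  have p1: "(2 * s/(1+s)) powr (x-1) = 2 powr (x-1) * s powr (x-1) / (1+s) powr (x-1)"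
    using s u by (simp add: powr_divide powr_mult)
  have p2: "((1-s)/(1+s)) powr (y-1) = (1-s) powr (y-1) / (1+s) powr (y-1)"
    using s u by (simp add: powr_divide)
  have p3: "(1/(1+s)) powr (-a) = (1+s) powr a"
    using s u by (simp add: powr_divide powr_minus)
  have p4: "(1+s)^2 = (1+s) powr 2" using u by (simp add: powr_realpow)
  have p5: "(1+s) powr (a-x-y) = (1+s) powr a / ((1+s) powr 2 * (1+s) powr (x-1) * (1+s) powr (y-1))"
  proof -
    have "a-x-y = a - (2 + (x-1) + (y-1))" by simp
    hence "(1+s) powr (a-x-y) = (1+s) powr a / (1+s) powr (2 + (x-1) + (y-1))" by (simp only: powr_diff)
    also have "(1+s) powr (2 + (x-1) + (y-1)) = (1+s) powr 2 * (1+s) powr (x-1) * (1+s) powr (y-1)"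
      by (simp only: powr_add)
    finally show ?thesis .
  qed
  have p6: "2 powr x = 2 * 2 powr (x-1)"
    by (simp add: powr_diff)
  have nz: "(1+s) powr 2 \<noteq> 0" "(1+s) powr (x-1) \<noteq> 0" "(1+s) powr (y-1) \<noteq> 0" using u by auto
  show ?thesis
    unfolding wB_def e1 e2 p1 p2 p3 p4 p5 p6 using nz by (simp add: divide_simps)
qed

lemma I2:
  fixes a x y :: real
  assumes x: "x > 1" and y: "y > 1"
  defines "f \<equiv> (\<lambda>t. wB x y t * (1 - t/2) powr (-a))"
  shows "((\<lambda>s. 2 powr x * (s powr (x-1) * (1-s) powr (y-1) * (1+s) powr (a-x-y))) has_integral integral {0..1} f) {0..1}"
proof -
  have contf: "continuous_on {0..1} f"
    unfolding f_def wB_def using x y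
    by (intro continuous_intros continuous_on_powr') (auto intro!: continuous_intros)
  define g where "g = (\<lambda>s::real. 2 * s/(1+s))"
  define g' where "g' = (\<lambda>s::real. 2/(1+s)^2)"
  have "((\<lambda>s. g' s *\<^sub>R f (g s)) has_integral (integral {g 0..g 1} f)) {0..1}"
  proof (rule has_integral_substitution[where c=0 and d=1])
    show "g 0 \<le> g 1" by (simp add: g_def)
    show "g ` {0..1} \<subseteq> {0..1}" by (auto simp: g_def field_simps)
    show "continuous_on {0..1} f" by (rule contf)
    fix s :: real assume s: "s \<in> {0..1}"
    show "(g has_field_derivative g' s) (at s within {0..1})"
      unfolding g_def g'_def using s
      by (auto intro!: derivative_eq_intros simp: field_simps power2_eq_square)
  qed simp
  moreover have "g 0 = 0" "g 1 = 1" by (simp_all add: g_def)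
  ultimately have H: "((\<lambda>s. g' s *\<^sub>R f (g s)) has_integral (integral {0..1} f)) {0..1}" by simp
  show ?thesis
  proof (rule has_integral_cong[THEN iffD1, OF _ H])
    fix s :: real assume s: "s \<in> {0..1}"
    consider "s = 0" | "s = 1" | "0 < s \<and> s < 1" using s by force
    then show "g' s *\<^sub>R f (g s) = 2 powr x * (s powr (x-1) * (1-s) powr (y-1) * (1+s) powr (a-x-y))"
    proof cases
      case 1 thus ?thesis by (simp add: g_def f_def wB_def)
    next
      case 2 thus ?thesis by (simp add: g_def f_def wB_def)
    next
      case 3 thus ?thesis using I2_pt[of s x y a] by (simp add: g_def g'_def f_def)
    qed
  qed
qed

lemma I3:
  fixes q p :: real
  assumes q: "q > 1" and p: "p > 0"
  shows "((\<lambda>s. 2 * (s powr (2*q - 1) * (1 - s^2) powr p)) has_integral Beta q (p+1)) {0..1}"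
proof -
  define f where "f = (\<lambda>t::real. t powr (q - 1) * (1 - t) powr ((p+1) - 1))"
  have contf: "continuous_on {0..1} f"
    unfolding f_def using q p
    by (intro continuous_intros continuous_on_powr') (auto intro!: continuous_intros)
  have "((\<lambda>s. (2 * s) *\<^sub>R f (s^2)) has_integral (integral {0^2..1^2} f)) {0..1::real}"
  proof (rule has_integral_substitution[where c=0 and d=1])
    show "(0::real)^2 \<le> 1^2" by simp
    show "(\<lambda>s::real. s^2) ` {0..1} \<subseteq> {0..1}"
      by (auto intro: power_le_one)
    show "continuous_on {0..1} f" by (rule contf)
    fix s :: real assume s: "s \<in> {0..1}"
    show "((\<lambda>s. s^2) has_field_derivative 2 * s) (at s within {0..1})"
      by (auto intro!: derivative_eq_intros)
  qed simp
  hence H: "((\<lambda>s. (2 * s) *\<^sub>R f (s^2)) has_integral (integral {0..1} f)) {0..1::real}" by simp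
  have "integral {0..1} f = Beta q (p+1)"
    unfolding f_def using q p by (intro integral_unique has_integral_Beta_real) auto
  with H have H': "((\<lambda>s. (2 * s) *\<^sub>R f (s^2)) has_integral Beta q (p+1)) {0..1::real}" by simp
  show ?thesis
  proof (rule has_integral_cong[THEN iffD1, OF _ H'])
    fix s :: real assume s: "s \<in> {0..1}"
    show "(2 * s) *\<^sub>R f (s^2) = 2 * (s powr (2*q - 1) * (1 - s^2) powr p)"
    proof (cases "s = 0")
      case True thus ?thesis by (simp add: f_def)
    next
      case False
      with s have "s > 0" by auto
      have "(s^2) powr (q-1) = s powr (2*q - 2)"
        using \<open>s > 0\<close> proof -
        have "(s^2) powr (q-1) = (s powr 2) powr (q-1)" using \<open>s > 0\<close> by (simp add: powr_realpow)
        also have "\<dots> = s powr (2 * (q-1))" by (simp add: powr_powr)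
        finally show ?thesis by (simp add: right_diff_distrib)
      qed
      moreover have "s * s powr (2*q-2) = s powr (2*q-1)"
        using \<open>s > 0\<close> proof -
        have "s powr (2*q-1) = s powr (1 + (2*q-2))" by simp
        also have "\<dots> = s * s powr (2*q-2)" using \<open>s > 0\<close> by (simp only: powr_add powr_one_gt_zero_iff) simp
        finally show ?thesis by simp
      qed
      ultimately show ?thesis unfolding f_def by (simp add: mult.assoc)
    qed
  qed
qed

lemma beta_shift:
  fixes x y :: real
  assumes "x > 0" "y > 0"
  shows "Beta (x + of_nat N) y = Gamma x * Gamma y / Gamma (x+y) * (pochhammer x N / pochhammer (x+y) N)"
proof -
  have g1: "Gamma (x + of_nat N) = pochhammer x N * Gamma x"
    using assms pochhammer_Gamma[of x N] by (auto simp: Gamma_eq_zero_iff nonpos_Ints_def field_simps)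
  have g2: "Gamma (x + of_nat N + y) = pochhammer (x+y) N * Gamma (x+y)"
    using assms pochhammer_Gamma[of "x+y" N] by (auto simp: Gamma_eq_zero_iff nonpos_Ints_def field_simps add_ac)
  have "pochhammer (x+y) N > 0" using assms by (intro pochhammer_pos) auto
  moreover have "Gamma (x+y) > 0" using assms by (intro Gamma_real_pos) auto
  ultimately show ?thesis
    unfolding Beta_def g1 g2 by (simp add: field_simps)
qed

lemma G_lemma:
  fixes a x y :: real
  assumes a: "a > 0" and x: "x > 1" and y: "y > 1"
  shows "(\<lambda>N. pochhammer a N * pochhammer x N / (pochhammer (x+y) N * fact N) * (1/2)^N) sums
           (Gamma (x+y) / (Gamma x * Gamma y) *
             integral {0..1} (\<lambda>s. 2 powr x * (s powr (x-1) * (1-s) powr (y-1) * (1+s) powr (a-x-y))))"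
proof -
  define f where "f = (\<lambda>t. wB x y t * (1 - t/2) powr (-a))"
  have S: "(\<lambda>N. pochhammer a N / (fact N * 2^N) * Beta (x + of_nat N) y) sums integral {0..1} f"
    unfolding f_def using I1(1)[OF a x y] .
  have I: "integral {0..1} (\<lambda>s. 2 powr x * (s powr (x-1) * (1-s) powr (y-1) * (1+s) powr (a-x-y))) = integral {0..1} f"
    unfolding f_def using I2[OF x y, of a] by (rule integral_unique)
  have Gx: "Gamma x > 0" "Gamma y > 0" "Gamma (x+y) > 0" using x y by (auto intro!: Gamma_real_pos)
  have "(\<lambda>N. Gamma (x+y) / (Gamma x * Gamma y) * (pochhammer a N / (fact N * 2^N) * Beta (x + of_nat N) y)) sums
         (Gamma (x+y) / (Gamma x * Gamma y) * integral {0..1} f)"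
    by (rule sums_mult[OF S])
  moreover have "Gamma (x+y) / (Gamma x * Gamma y) * (pochhammer a N / (fact N * 2^N) * Beta (x + of_nat N) y)
      = pochhammer a N * pochhammer x N / (pochhammer (x+y) N * fact N) * (1/2)^N" for N
  proof -
    have B: "Beta (x + of_nat N) y = Gamma x * Gamma y / Gamma (x+y) * (pochhammer x N / pochhammer (x+y) N)"
      using x y by (intro beta_shift) auto
    have "pochhammer (x+y) N > 0" using x y by (intro pochhammer_pos) auto
    moreover have "Gamma x \<noteq> 0" "Gamma y \<noteq> 0" "Gamma (x+y) \<noteq> 0" using Gx by auto
    ultimately show ?thesis unfolding B by (simp add: field_simps power_divide)
  qed
  ultimately show ?thesis unfolding I by simp
qed

lemma J_lemma:
  fixes x p \<sigma> :: real and i :: nat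
  assumes x: "x > 2" and p: "p > 0"
  shows "((\<lambda>s. 2 powr x * (s powr (x-1) * (1-s^2) powr p * (1 + \<sigma> * s)^i)) has_integral
           (2 powr x * (\<Sum>r\<le>i. of_nat (i choose r) * \<sigma>^r * Beta ((x + of_nat r)/2) (p+1) / 2))) {0..1}"
proof -
  have H: "((\<lambda>s. 2 powr x * (\<Sum>r\<le>i. (of_nat (i choose r) * \<sigma>^r / 2) * (2 * (s powr (2*((x + of_nat r)/2) - 1) * (1 - s^2) powr p))))
      has_integral (2 powr x * (\<Sum>r\<le>i. (of_nat (i choose r) * \<sigma>^r / 2) * Beta ((x + of_nat r)/2) (p+1)))) {0..1}"
    using x p by (intro has_integral_mult_right has_integral_sum finite_atMost I3) auto
  have V: "2 powr x * (\<Sum>r\<le>i. (of_nat (i choose r) * \<sigma>^r / 2) * Beta ((x + of_nat r)/2) (p+1))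
     = 2 powr x * (\<Sum>r\<le>i. of_nat (i choose r) * \<sigma>^r * Beta ((x + of_nat r)/2) (p+1) / 2)"
    by (simp add: mult_ac)
  have F: "2 powr x * (\<Sum>r\<le>i. (of_nat (i choose r) * \<sigma>^r / 2) * (2 * (s powr (2*((x + of_nat r)/2) - 1) * (1 - s^2) powr p)))
      = 2 powr x * (s powr (x-1) * (1-s^2) powr p * (1 + \<sigma> * s)^i)" if "s \<in> {0..1}" for s
  proof -
    have "s powr (x-1) * (1 + \<sigma> * s)^i = (\<Sum>r\<le>i. of_nat (i choose r) * \<sigma>^r * s powr (x + of_nat r - 1))"
    proof (cases "s = 0")
      case True thus ?thesis by (simp add: zero_power)
    next
      case False
      with that have s: "s > 0" by auto
      have "(1 + \<sigma> * s)^i = (\<Sum>r\<le>i. of_nat (i choose r) * (\<sigma> * s)^r)"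
        using binomial_ring[of "\<sigma> * s" 1 i] by (simp add: add.commute)
      moreover have "s powr (x-1) * (\<sigma> * s)^r = \<sigma>^r * s powr (x + of_nat r - 1)" for r
        using s by (simp add: power_mult_distrib powr_add powr_diff powr_realpow[symmetric] field_simps)
      ultimately show ?thesis by (simp add: sum_distrib_left mult_ac)
    qed
    hence R: "2 powr x * (s powr (x-1) * (1-s^2) powr p * (1 + \<sigma> * s)^i) =
       2 powr x * (1-s^2) powr p * (\<Sum>r\<le>i. of_nat (i choose r) * \<sigma>^r * s powr (x + of_nat r - 1))"
      by (simp add: mult_ac)
    have eq: "2*((x + of_nat r)/2) - 1 = x + of_nat r - 1" for r :: nat by simp
    show ?thesis unfolding R eq
      by (simp add: sum_distrib_left sum_distrib_right mult_ac)
  qed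
  show ?thesis
    using has_integral_cong[THEN iffD1, OF _ H, of "\<lambda>s. 2 powr x * (s powr (x-1) * (1-s^2) powr p * (1 + \<sigma> * s)^i)"] F V
    by simp
qed

definition hterm :: "complex \<Rightarrow> complex \<Rightarrow> complex \<Rightarrow> nat \<Rightarrow> complex" where
  "hterm a e d N = pochhammer a N * pochhammer e N / (pochhammer d N * fact N) * (1/2)^N"

definition R1 :: "nat \<Rightarrow> complex \<Rightarrow> complex \<Rightarrow> complex" where
  "R1 i a e = 2 powr (e - 1) * Gamma ((1 + a - e - of_nat i)/2) * Gamma ((1 + a + e + of_nat i)/2)
     * rGamma ((1 + a - e + of_nat i)/2) * rGamma e
     * (\<Sum>r\<le>i. (-1)^r * of_nat (i choose r) * Gamma ((e + of_nat r)/2) * rGamma ((1 + a - of_nat i + of_nat r)/2))"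

definition R2 :: "nat \<Rightarrow> complex \<Rightarrow> complex \<Rightarrow> complex" where
  "R2 i a e = 2 powr (e - 1) * Gamma ((1 + a + e - of_nat i)/2) * rGamma e
     * (\<Sum>r\<le>i. of_nat (i choose r) * Gamma ((e + of_nat r)/2) * rGamma ((1 + a - of_nat i + of_nat r)/2))"

lemma real_sums_part:
  fixes a x y p \<sigma> :: real and i :: nat
  assumes a: "a > 0" and x: "x > 2" and y: "y > 1" and p: "p > 0"
    and pt: "\<And>s. s \<in> {0..1} \<Longrightarrow> s powr (x-1) * (1-s) powr (y-1) * (1+s) powr (a-x-y) = s powr (x-1) * (1-s^2) powr p * (1 + \<sigma> * s)^i"
  shows "(\<lambda>N. pochhammer a N * pochhammer x N / (pochhammer (x+y) N * fact N) * (1/2)^N) sums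
           (Gamma (x+y) / (Gamma x * Gamma y) *
             (2 powr x * (\<Sum>r\<le>i. of_nat (i choose r) * \<sigma>^r * Beta ((x + of_nat r)/2) (p+1) / 2)))"
proof -
  have J: "((\<lambda>s. 2 powr x * (s powr (x-1) * (1-s^2) powr p * (1 + \<sigma> * s)^i)) has_integral
           (2 powr x * (\<Sum>r\<le>i. of_nat (i choose r) * \<sigma>^r * Beta ((x + of_nat r)/2) (p+1) / 2))) {0..1}"
    by (rule J_lemma[OF x p])
  have J': "((\<lambda>s. 2 powr x * (s powr (x-1) * (1-s) powr (y-1) * (1+s) powr (a-x-y))) has_integral
           (2 powr x * (\<Sum>r\<le>i. of_nat (i choose r) * \<sigma>^r * Beta ((x + of_nat r)/2) (p+1) / 2))) {0..1}"
    by (rule has_integral_cong[THEN iffD2, OF _ J]) (simp add: pt)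
  show ?thesis using G_lemma[OF a _ y, of x] x integral_unique[OF J'] by simp
qed

lemma hterm_real:
  "hterm (of_real a) (of_real x) (of_real z) N =
     of_real (pochhammer a N * pochhammer x N / (pochhammer z N * fact N) * (1/2)^N)"
  by (simp add: hterm_def pochhammer_of_real)

lemma real_base1:
  fixes a e :: real and i :: nat
  assumes e: "e > 2" and a: "a > e + 1 + real i"
  shows "(\<lambda>N. hterm (of_real a) (of_real e) ((1 + of_real a + of_real e + of_nat i)/2) N) sums R1 i (of_real a) (of_real e)"
proof -
  define y where "y = (1 + a - e + real i)/2"
  define p where "p = (a - e - 1 - real i)/2"
  have p0: "p > 0" and y1: "y > 1" and a0: "a > 0" using a e by (auto simp: p_def y_def)
  have xy: "e + y = (1 + a + e + real i)/2" by (simp add: y_def field_simps)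
  have pt: "s powr (e-1) * (1-s) powr (y-1) * (1+s) powr (a-e-y) = s powr (e-1) * (1-s^2) powr p * (1 + (-1) * s)^i"
    if "s \<in> {0..1}" for s
  proof -
    have "y - 1 = p + real i" "a - e - y = p" by (simp_all add: y_def p_def field_simps)
    moreover have "(1-s) powr (p + real i) * (1+s) powr p = (1-s^2) powr p * (1 - s)^i"
    proof (cases "s = 1")
      case True thus ?thesis using p0 by simp
    next
      case False
      with that have s: "s < 1" "0 \<le> s" by auto
      have "(1-s) powr (p + real i) = (1-s) powr p * (1-s)^i"
        using s by (simp add: powr_add powr_realpow)
      moreover have "(1-s) powr p * (1+s) powr p = (1-s^2) powr p"
        using s by (simp add: powr_mult[symmetric] power2_eq_square algebra_simps)
      ultimately show ?thesis by (simp add: mult_ac)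
    qed
    ultimately show ?thesis by (simp add: mult_ac)
  qed
  have S: "(\<lambda>N. pochhammer a N * pochhammer e N / (pochhammer (e+y) N * fact N) * (1/2)^N) sums
           (Gamma (e+y) / (Gamma e * Gamma y) *
             (2 powr e * (\<Sum>r\<le>i. of_nat (i choose r) * (-1)^r * Beta ((e + of_nat r)/2) (p+1) / 2)))"
    by (rule real_sums_part[OF a0 e y1 p0 pt])
  define V where "V = Gamma (e+y) / (Gamma e * Gamma y) *
             (2 powr e * (\<Sum>r\<le>i. of_nat (i choose r) * (-1)^r * Beta ((e + of_nat r)/2) (p+1) / 2))"
  have S': "(\<lambda>N. hterm (of_real a) (of_real e) ((1 + of_real a + of_real e + of_nat i)/2) N) sums of_real V"
  proof -
    have "(1 + complex_of_real a + of_real e + of_nat i)/2 = of_real (e+y)" by (simp add: xy)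
    hence "hterm (of_real a) (of_real e) ((1 + of_real a + of_real e + of_nat i)/2) N =
       of_real (pochhammer a N * pochhammer e N / (pochhammer (e+y) N * fact N) * (1/2)^N)" for N
      by (simp only: hterm_real)
    hence "(\<lambda>N. hterm (of_real a) (of_real e) ((1 + of_real a + of_real e + of_nat i)/2) N) =
       (\<lambda>N. of_real (pochhammer a N * pochhammer e N / (pochhammer (e+y) N * fact N) * (1/2)^N))" by (rule ext)
    thus ?thesis using sums_of_real[OF S] unfolding V_def by (simp only:)
  qed
  have c1: "(1 + complex_of_real a - of_real e - of_nat i)/2 = of_real (p+1)" by (simp add: p_def field_simps)
  have c2: "(1 + complex_of_real a + of_real e + of_nat i)/2 = of_real (e+y)" by (simp add: xy)
  have c3: "(1 + complex_of_real a - of_real e + of_nat i)/2 = of_real y" by (simp add: y_def)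
  have c4: "(complex_of_real e + of_nat r)/2 = of_real ((e + real r)/2)" for r by simp
  have c5: "(1 + complex_of_real a - of_nat i + of_nat r)/2 = of_real ((e + real r)/2 + (p+1))" for r
    by (simp add: p_def field_simps)
  have c6: "(2::complex) powr (of_real e - 1) = of_real (2 powr (e - 1))"
    using powr_of_real[of 2 "e-1"] by simp
  have R: "R1 i (of_real a) (of_real e) = of_real (2 powr (e - 1) * Gamma (p+1) * Gamma (e+y) * rGamma y * rGamma e *
        (\<Sum>r\<le>i. (-1)^r * of_nat (i choose r) * Gamma ((e + real r)/2) * rGamma ((e + real r)/2 + (p+1))))"
    unfolding R1_def c1 c2 c3 c4 c5 c6 Gamma_complex_of_real rGamma_complex_of_real by simp
  have "V = 2 powr (e - 1) * Gamma (p+1) * Gamma (e+y) * rGamma y * rGamma e *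
        (\<Sum>r\<le>i. (-1)^r * of_nat (i choose r) * Gamma ((e + real r)/2) * rGamma ((e + real r)/2 + (p+1)))"
  proof -
    have two: "2 powr e = 2 * 2 powr (e - 1)" by (simp add: powr_diff)
    have se: "(\<Sum>r\<le>i. of_nat (i choose r) * (-1)^r * Beta ((e + of_nat r)/2) (p+1) / 2) =
      Gamma (p+1) / 2 * (\<Sum>r\<le>i. (-1)^r * of_nat (i choose r) * Gamma ((e + real r)/2) * rGamma ((e + real r)/2 + (p+1)))"
      unfolding sum_distrib_left
    proof (intro sum.cong refl)
      fix r assume "r \<in> {..i}"
      show "of_nat (i choose r) * (-1)^r * Beta ((e + of_nat r)/2) (p+1) / 2 =
        Gamma (p+1) / 2 * ((-1)^r * of_nat (i choose r) * Gamma ((e + real r)/2) * rGamma ((e + real r)/2 + (p+1)))"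
        unfolding Beta_def rGamma_inverse_Gamma by (simp add: inverse_eq_divide mult_ac)
    qed
    show ?thesis unfolding V_def se two rGamma_inverse_Gamma
      by (simp add: inverse_eq_divide mult_ac)
  qed
  with S' R show ?thesis by simp
qed


lemma real_base2:
  fixes a e :: real and i :: nat
  assumes e: "e > 2" and a: "a > e + 1 + real i"
  shows "(\<lambda>N. hterm (of_real a) (of_real e) ((1 + of_real a + of_real e - of_nat i)/2) N) sums R2 i (of_real a) (of_real e)"
proof -
  define y where "y = (1 + a - e - real i)/2"
  define p where "p = (a - e - 1 - real i)/2"
  have p0: "p > 0" and y1: "y > 1" and a0: "a > 0" using a e by (auto simp: p_def y_def)
  have xy: "e + y = (1 + a + e - real i)/2" by (simp add: y_def field_simps)
  have pt: "s powr (e-1) * (1-s) powr (y-1) * (1+s) powr (a-e-y) = s powr (e-1) * (1-s^2) powr p * (1 + 1 * s)^i"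
    if "s \<in> {0..1}" for s
  proof -
    have "y - 1 = p" "a - e - y = p + real i" by (simp_all add: y_def p_def field_simps)
    moreover have "(1-s) powr p * (1+s) powr (p + real i) = (1-s^2) powr p * (1 + s)^i"
    proof -
      from that have s: "s \<le> 1" "0 \<le> s" by auto
      have "(1+s) powr (p + real i) = (1+s) powr p * (1+s)^i"
        using s by (simp add: powr_add powr_realpow)
      moreover have "(1-s) powr p * (1+s) powr p = (1-s^2) powr p"
        using s by (simp add: powr_mult[symmetric] power2_eq_square algebra_simps)
      ultimately show ?thesis by (simp add: mult_ac)
    qed
    ultimately show ?thesis by (simp add: mult_ac)
  qed
  have S: "(\<lambda>N. pochhammer a N * pochhammer e N / (pochhammer (e+y) N * fact N) * (1/2)^N) sums
           (Gamma (e+y) / (Gamma e * Gamma y) *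
             (2 powr e * (\<Sum>r\<le>i. of_nat (i choose r) * 1^r * Beta ((e + of_nat r)/2) (p+1) / 2)))"
    by (rule real_sums_part[OF a0 e y1 p0 pt])
  define V where "V = Gamma (e+y) / (Gamma e * Gamma y) *
             (2 powr e * (\<Sum>r\<le>i. of_nat (i choose r) * 1^r * Beta ((e + of_nat r)/2) (p+1) / 2))"
  have S': "(\<lambda>N. hterm (of_real a) (of_real e) ((1 + of_real a + of_real e - of_nat i)/2) N) sums of_real V"
  proof -
    have "(1 + complex_of_real a + of_real e - of_nat i)/2 = of_real (e+y)" by (simp add: xy)
    hence "hterm (of_real a) (of_real e) ((1 + of_real a + of_real e - of_nat i)/2) N =
       of_real (pochhammer a N * pochhammer e N / (pochhammer (e+y) N * fact N) * (1/2)^N)" for N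
      by (simp only: hterm_real)
    hence "(\<lambda>N. hterm (of_real a) (of_real e) ((1 + of_real a + of_real e - of_nat i)/2) N) =
       (\<lambda>N. of_real (pochhammer a N * pochhammer e N / (pochhammer (e+y) N * fact N) * (1/2)^N))" by (rule ext)
    thus ?thesis using sums_of_real[OF S] unfolding V_def by (simp only:)
  qed
    have c2: "(1 + complex_of_real a + of_real e - of_nat i)/2 = of_real (e+y)" by (simp add: xy)
    have c4: "(complex_of_real e + of_nat r)/2 = of_real ((e + real r)/2)" for r by simp
  have c5: "(1 + complex_of_real a - of_nat i + of_nat r)/2 = of_real ((e + real r)/2 + (p+1))" for r
    by (simp add: p_def field_simps)
  have c6: "(2::complex) powr (of_real e - 1) = of_real (2 powr (e - 1))"
    using powr_of_real[of 2 "e-1"] by simp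
  have R: "R2 i (of_real a) (of_real e) = of_real (2 powr (e - 1) * Gamma (e+y) * rGamma e *
        (\<Sum>r\<le>i. of_nat (i choose r) * Gamma ((e + real r)/2) * rGamma ((e + real r)/2 + (p+1))))"
    unfolding R2_def c2 c4 c5 c6 Gamma_complex_of_real rGamma_complex_of_real by simp
  have "V = 2 powr (e - 1) * Gamma (e+y) * rGamma e *
        (\<Sum>r\<le>i. of_nat (i choose r) * Gamma ((e + real r)/2) * rGamma ((e + real r)/2 + (p+1)))"
  proof -
    have two: "2 powr e = 2 * 2 powr (e - 1)" by (simp add: powr_diff)
    have se: "(\<Sum>r\<le>i. of_nat (i choose r) * 1^r * Beta ((e + of_nat r)/2) (p+1) / 2) =
      Gamma (p+1) / 2 * (\<Sum>r\<le>i. of_nat (i choose r) * Gamma ((e + real r)/2) * rGamma ((e + real r)/2 + (p+1)))"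
      unfolding sum_distrib_left
    proof (intro sum.cong refl)
      fix r assume "r \<in> {..i}"
      show "of_nat (i choose r) * 1^r * Beta ((e + of_nat r)/2) (p+1) / 2 =
        Gamma (p+1) / 2 * (of_nat (i choose r) * Gamma ((e + real r)/2) * rGamma ((e + real r)/2 + (p+1)))"
        unfolding Beta_def rGamma_inverse_Gamma by (simp add: inverse_eq_divide mult_ac)
    qed
    have yp: "y = p + 1" by (simp add: y_def p_def field_simps)
    have gp: "Gamma (p+1) \<noteq> 0" using p0 by (simp add: Gamma_eq_zero_iff nonpos_Ints_def)
    show ?thesis unfolding V_def se two rGamma_inverse_Gamma yp
      using gp by (simp add: inverse_eq_divide mult_ac)
  qed
  with S' R show ?thesis by simp
qed

lemma hterm_Suc:
  assumes "pochhammer d (Suc n) \<noteq> 0"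
  shows "hterm a e d (Suc n) = hterm a e d n * ((a + of_nat n) * (e + of_nat n) / ((d + of_nat n) * (of_nat n + 1)) / 2)"
  using assms by (simp add: hterm_def pochhammer_Suc field_simps)

lemma ratio_ineq:
  fixes M n :: real
  assumes "M \<ge> 0" "n \<ge> 10 * (M + 1)"
  shows "2 * (M + n)^2 \<le> 3 * ((n - M) * (n + 1))"
proof -
  have a': "n \<ge> 10 * M + 10" using assms by (simp add: algebra_simps)
  have h1: "M + n \<le> 11/10 * n" using a' assms by linarith
  have h1': "0 \<le> M + n" using a' assms by linarith
  have h2: "(M + n)^2 \<le> (11/10 * n)^2" by (rule power_mono[OF h1 h1'])
  have h3: "9/10 * n \<le> n - M" "0 \<le> 9/10 * n" "n \<le> n + 1" "0 \<le> n" using a' assms by linarith+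
  have h5: "(9/10 * n) * n \<le> (n - M) * (n + 1)" by (rule mult_mono[OF h3(1) h3(3) _ h3(4)]) (use a' assms in linarith)
  have e1: "(11/10 * n)^2 = 121/100 * n^2"
  proof -
    have "(11/10 * n)^2 = (11/10)^2 * n^2" by (rule power_mult_distrib)
    also have "(11/10::real)^2 = 121/100" by (simp add: power2_eq_square)
    finally show ?thesis .
  qed
  have e2: "(9/10 * n) * n = 9/10 * n^2" by (simp add: power2_eq_square)
  have "0 \<le> n^2" by simp
  thus ?thesis using h2 h5 e1 e2 by linarith
qed

lemma ratio_bound:
  fixes a e d :: complex and M :: real
  assumes M: "M \<ge> 0" "norm a \<le> M" "norm e \<le> M" "norm d \<le> M" and n: "real n \<ge> 10 * (M + 1)"
  shows "norm ((a + of_nat n) * (e + of_nat n) / ((d + of_nat n) * (of_nat n + 1)) / 2) \<le> 3/4"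
proof -
  have na: "norm (a + of_nat n) \<le> M + n" using norm_triangle_ineq[of a "of_nat n"] M by simp
  have ne: "norm (e + of_nat n) \<le> M + n" using norm_triangle_ineq[of e "of_nat n"] M by simp
  have nd: "norm (d + of_nat n) \<ge> n - M"
    using norm_triangle_ineq2[of "of_nat n" "-d"] M by (simp add: add.commute)
  have pos: "n - M > 0" using n M by simp
  have "norm ((a + of_nat n) * (e + of_nat n) / ((d + of_nat n) * (of_nat n + 1)) / 2)
      = norm (a + of_nat n) * norm (e + of_nat n) / (norm (d + of_nat n) * (real n + 1)) / 2"
    by (simp add: norm_mult norm_divide) (metis add.commute norm_of_nat of_nat_Suc)
  also have "\<dots> \<le> (M + n) * (M + n) / ((n - M) * (real n + 1)) / 2"
    using na ne nd pos M(1) by (intro divide_right_mono frac_le mult_mono mult_pos_pos) auto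
  also have "\<dots> \<le> 3/4"
  proof -
    have den: "(n - M) * (real n + 1) > 0" using pos by simp
    have "(M + n) * (M + n) / ((n - M) * (real n + 1)) / 2 = (M + n)^2 / (2 * ((n - M) * (real n + 1)))"
      by (simp add: power2_eq_square)
    also have "\<dots> \<le> 3/4"
    proof -
      have d2: "0 < 2 * ((real n - M) * (real n + 1))" using den by simp
      have "(M + real n)^2 \<le> 3/4 * (2 * ((real n - M) * (real n + 1)))"
        using ratio_ineq[OF M(1) n] by linarith
      thus ?thesis by (subst pos_divide_le_eq[OF d2])
    qed
    finally show ?thesis .
  qed
  finally show ?thesis .
qed

lemma holo_series:
  assumes S: "open S" and A: "A holomorphic_on S" and E: "E holomorphic_on S" and D: "D holomorphic_on S"
    and Dn: "\<And>z. z \<in> S \<Longrightarrow> D z \<notin> \<int>\<^sub>\<le>\<^sub>0"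
  shows "(\<lambda>z. suminf (\<lambda>N. hterm (A z) (E z) (D z) N)) holomorphic_on S"
proof (rule holomorphic_uniform_sequence[OF S])
  have pz: "pochhammer (D z) n \<noteq> 0" if "z \<in> S" for z n
    using Dn[OF that] by (auto simp: pochhammer_eq_0_iff)
  have hol_t: "(\<lambda>z. hterm (A z) (E z) (D z) N) holomorphic_on S" for N
    unfolding hterm_def using pz by (intro holomorphic_intros A E D) auto
  show "(\<lambda>z. \<Sum>N<n. hterm (A z) (E z) (D z) N) holomorphic_on S" for n
    by (intro holomorphic_intros hol_t)
  fix x assume x: "x \<in> S"
  obtain \<delta> where \<delta>: "\<delta> > 0" "cball x \<delta> \<subseteq> S" using S x open_contains_cball by blast
  define K where "K = cball x \<delta>"
  have K: "compact K" "K \<subseteq> S" using \<delta> by (auto simp: K_def)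
  have bnd: "\<exists>B. \<forall>z\<in>K. norm (f z) \<le> B" if "continuous_on S f" for f :: "complex \<Rightarrow> complex"
  proof -
    have "compact (f ` K)" by (rule compact_continuous_image[OF continuous_on_subset[OF that K(2)] K(1)])
    hence "bounded (f ` K)" by (rule compact_imp_bounded)
    then obtain B where "\<forall>y\<in>f ` K. norm y \<le> B" unfolding bounded_iff by blast
    thus ?thesis by auto
  qed
  obtain BA where BA: "\<forall>z\<in>K. norm (A z) \<le> BA" using bnd[OF holomorphic_on_imp_continuous_on[OF A]] by blast
  obtain BE where BE: "\<forall>z\<in>K. norm (E z) \<le> BE" using bnd[OF holomorphic_on_imp_continuous_on[OF E]] by blast
  obtain BD where BD: "\<forall>z\<in>K. norm (D z) \<le> BD" using bnd[OF holomorphic_on_imp_continuous_on[OF D]] by blast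
  define M where "M = max 0 (max BA (max BE BD))"
  have M0: "M \<ge> 0" unfolding M_def by simp
  have MA: "BA \<le> M" "BE \<le> M" "BD \<le> M" unfolding M_def by auto
  have M: "M \<ge> 0" "\<And>z. z \<in> K \<Longrightarrow> norm (A z) \<le> M \<and> norm (E z) \<le> M \<and> norm (D z) \<le> M"
    using M0 BA BE BD MA by (meson order_trans)+
  define N0 where "N0 = nat \<lceil>10 * (M + 1)\<rceil>"
  have N0: "real n \<ge> 10 * (M + 1)" if "n \<ge> N0" for n
    using that unfolding N0_def by linarith
  obtain C where C: "\<forall>z\<in>K. norm (hterm (A z) (E z) (D z) N0) \<le> C"
    using bnd[OF holomorphic_on_imp_continuous_on[OF hol_t]] by blast
  have decay: "norm (hterm (A z) (E z) (D z) (N0 + k)) \<le> C * (3/4)^k" if z: "z \<in> K" for z k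
  proof (induction k)
    case 0 thus ?case using C z by simp
  next
    case (Suc k)
    have zS: "z \<in> S" using z K by auto
    have "hterm (A z) (E z) (D z) (Suc (N0 + k)) = hterm (A z) (E z) (D z) (N0 + k) *
       ((A z + of_nat (N0 + k)) * (E z + of_nat (N0 + k)) / ((D z + of_nat (N0 + k)) * (of_nat (N0 + k) + 1)) / 2)"
      by (rule hterm_Suc[OF pz[OF zS]])
    hence "norm (hterm (A z) (E z) (D z) (N0 + Suc k)) = norm (hterm (A z) (E z) (D z) (N0 + k)) *
       norm ((A z + of_nat (N0 + k)) * (E z + of_nat (N0 + k)) / ((D z + of_nat (N0 + k)) * (of_nat (N0 + k) + 1)) / 2)"
      by (simp only: add_Suc_right norm_mult)
    also have "\<dots> \<le> (C * (3/4)^k) * (3/4)"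
      using M(1) M(2)[OF z] N0[of "N0 + k"] Suc.IH order_trans[OF norm_ge_zero Suc.IH]
      by (intro mult_mono ratio_bound) auto
    finally show ?case by simp
  qed
  have "uniform_limit K (\<lambda>n z. \<Sum>N<n. hterm (A z) (E z) (D z) N) (\<lambda>z. suminf (\<lambda>N. hterm (A z) (E z) (D z) N)) sequentially"
  proof (rule Weierstrass_m_test_ev)
    show "eventually (\<lambda>n. \<forall>z\<in>K. norm (hterm (A z) (E z) (D z) n) \<le> C * (4/3)^N0 * (3/4)^n) sequentially"
      unfolding eventually_sequentially
    proof (intro exI allI impI ballI)
      fix n z assume n: "N0 \<le> n" and z: "z \<in> K"
      have "norm (hterm (A z) (E z) (D z) n) = norm (hterm (A z) (E z) (D z) (N0 + (n - N0)))" using n by simp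
      also have "\<dots> \<le> C * (3/4)^(n - N0)" by (rule decay[OF z])
      also have "(3/4::real)^(n - N0) = (4/3)^N0 * (3/4)^n"
        using n by (simp add: power_diff power_divide field_simps)
      finally show "norm (hterm (A z) (E z) (D z) n) \<le> C * (4/3)^N0 * (3/4)^n" by (simp add: mult_ac)
    qed
    show "summable (\<lambda>n. C * (4/3)^N0 * (3/4::real)^n)"
      by (intro summable_mult summable_geometric) auto
  qed
  thus "\<exists>d>0. cball x d \<subseteq> S \<and> uniform_limit (cball x d) (\<lambda>n z. \<Sum>N<n. hterm (A z) (E z) (D z) N) (\<lambda>z. suminf (\<lambda>N. hterm (A z) (E z) (D z) N)) sequentially"
    using \<delta> unfolding K_def by blast
qed

lemma exists_outside_countable:
  fixes lo hi :: real and A :: "real set"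
  assumes "lo < hi" "countable A"
  shows "\<exists>x. lo < x \<and> x < hi \<and> x \<notin> A"
proof -
  have "uncountable ({lo<..<hi} - A)"
    using assms uncountable_open_interval[of lo hi] uncountable_minus_countable by blast
  hence "{lo<..<hi} - A \<noteq> {}" by (metis countable_empty)
  thus ?thesis by auto
qed

lemma cont_principle:
  fixes f g :: "complex \<Rightarrow> complex" and T :: "complex set" and lo hi :: real
  assumes cT: "countable T" and clT: "closed T" and hf: "f holomorphic_on -T" and hg: "g holomorphic_on -T"
    and lh: "lo < hi"
    and base: "\<And>x. lo < x \<Longrightarrow> x < hi \<Longrightarrow> complex_of_real x \<notin> T \<Longrightarrow> f (of_real x) = g (of_real x)"
    and w: "w \<notin> T"
  shows "f w = g w"
proof -
  define A where "A = (of_real :: real \<Rightarrow> complex) -` T"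
  have cA: "countable A"
  proof (rule countable_image_inj_on)
    show "countable ((of_real :: real \<Rightarrow> complex) ` A)"
      by (rule countable_subset[OF _ cT]) (auto simp: A_def)
    show "inj_on (of_real :: real \<Rightarrow> complex) A" by (auto simp: inj_on_def)
  qed
  define U where "U = (of_real :: real \<Rightarrow> complex) ` ({lo<..<hi} - A)"
  obtain x0 where x0: "lo < x0" "x0 < hi" "x0 \<notin> A" using exists_outside_countable[OF lh cA] by blast
  have op: "open (-T)" using clT by auto
  have con: "connected (-T)"
    using connected_open_diff_countable[of "UNIV :: complex set" T] cT connected_UNIV by (simp add: Compl_eq_Diff_UNIV)
  have lim_aux: "\<exists>x'\<in>U. x' \<noteq> complex_of_real x0 \<and> dist x' (complex_of_real x0) < \<epsilon>" if \<epsilon>: "\<epsilon> > 0" for \<epsilon>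
  proof -
    obtain x' where x': "x0 < x'" "x' < min hi (x0 + \<epsilon>)" "x' \<notin> A"
      using exists_outside_countable[of x0 "min hi (x0 + \<epsilon>)" A] x0 \<epsilon> cA by auto
    have "complex_of_real x' \<in> U" using x' x0 unfolding U_def by auto
    moreover have "complex_of_real x' \<noteq> complex_of_real x0" using x' by auto
    moreover have "dist (complex_of_real x') (complex_of_real x0) < \<epsilon>"
      using x' by (simp add: dist_norm flip: of_real_diff)
    ultimately show ?thesis by blast
  qed
  have lim: "complex_of_real x0 islimpt U"
    unfolding islimpt_approachable using lim_aux by blast
  have "(\<lambda>z. f z - g z) w = 0"
  proof (rule analytic_continuation[where f = "\<lambda>z. f z - g z", OF _ op con _ _ lim])
    show "(\<lambda>z. f z - g z) holomorphic_on -T" by (intro holomorphic_intros hf hg)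
    show "U \<subseteq> -T" by (auto simp: U_def A_def)
    show "complex_of_real x0 \<in> -T" using x0 by (auto simp: A_def)
    show "\<And>z. z \<in> U \<Longrightarrow> f z - g z = 0" using base by (auto simp: U_def A_def)
    show "w \<in> -T" using w by auto
  qed
  thus ?thesis by simp
qed

lemma countable_nonpos_Ints: "countable (\<int>\<^sub>\<le>\<^sub>0 :: complex set)"
proof -
  have "(\<int>\<^sub>\<le>\<^sub>0 :: complex set) \<subseteq> range of_int" by (auto simp: nonpos_Ints_def)
  thus ?thesis by (rule countable_subset) simp
qed

lemma aff_bad:
  fixes f :: "complex \<Rightarrow> complex"
  assumes f: "\<And>z. f z = k * z + c" and k: "k \<noteq> 0"
  shows "countable {z. f z \<in> \<int>\<^sub>\<le>\<^sub>0}" "closed {z. f z \<in> \<int>\<^sub>\<le>\<^sub>0}"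
proof -
  have "{z. f z \<in> \<int>\<^sub>\<le>\<^sub>0} \<subseteq> (\<lambda>w. (w - c) / k) ` \<int>\<^sub>\<le>\<^sub>0"
  proof
    fix z assume "z \<in> {z. f z \<in> \<int>\<^sub>\<le>\<^sub>0}"
    hence "f z \<in> \<int>\<^sub>\<le>\<^sub>0" by simp
    moreover have "z = (f z - c) / k" using k by (simp add: f)
    ultimately show "z \<in> (\<lambda>w. (w - c) / k) ` \<int>\<^sub>\<le>\<^sub>0" by blast
  qed
  thus "countable {z. f z \<in> \<int>\<^sub>\<le>\<^sub>0}"
    by (rule countable_subset) (intro countable_image countable_nonpos_Ints)
  have "{z. f z \<in> \<int>\<^sub>\<le>\<^sub>0} = f -` \<int>\<^sub>\<le>\<^sub>0" by auto
  also have "f = (\<lambda>z. k * z + c)" using f by auto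
  also have "closed ((\<lambda>z. k * z + c) -` \<int>\<^sub>\<le>\<^sub>0)"
    by (rule continuous_closed_vimage) (auto intro!: continuous_intros)
  finally show "closed {z. f z \<in> \<int>\<^sub>\<le>\<^sub>0}" using f by simp
qed

lemma Gamma_half_ok:
  fixes e :: real and r :: nat
  assumes "e > 0"
  shows "(complex_of_real e + of_nat r) / 2 \<notin> \<int>\<^sub>\<le>\<^sub>0"
proof
  assume "(complex_of_real e + of_nat r) / 2 \<in> \<int>\<^sub>\<le>\<^sub>0"
  then obtain n :: int where n: "(complex_of_real e + of_nat r) / 2 = of_int n" "n \<le> 0"
    by (auto simp: nonpos_Ints_def)
  have "Re ((complex_of_real e + of_nat r) / 2) = Re (of_int n)" using n(1) by (simp only:)
  hence "(e + real r)/2 = real_of_int n" by simp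
  moreover have "real_of_int n \<le> 0" using n(2) by simp
  ultimately show False using assms by (simp add: field_simps)
qed

definition bad1 :: "nat \<Rightarrow> complex \<Rightarrow> complex \<Rightarrow> bool" where
  "bad1 i a e \<longleftrightarrow> (1 + a + e + of_nat i)/2 \<in> \<int>\<^sub>\<le>\<^sub>0 \<or> (1 + a - e - of_nat i)/2 \<in> \<int>\<^sub>\<le>\<^sub>0
      \<or> (\<exists>r\<le>i. (e + of_nat r)/2 \<in> \<int>\<^sub>\<le>\<^sub>0)"

lemma stepB1:
  fixes e0 :: real
  assumes e0: "e0 > 2" and a: "\<not> bad1 i a (of_real e0)"
  shows "suminf (hterm a (of_real e0) ((1 + a + of_real e0 + of_nat i)/2)) = R1 i a (of_real e0)"
proof -
  define T where "T = {z. (1 + z + complex_of_real e0 + of_nat i)/2 \<in> \<int>\<^sub>\<le>\<^sub>0} \<union> {z. (1 + z - complex_of_real e0 - of_nat i)/2 \<in> \<int>\<^sub>\<le>\<^sub>0}"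
  have af1: "countable {z. (1 + z + complex_of_real e0 + of_nat i)/2 \<in> \<int>\<^sub>\<le>\<^sub>0}" "closed {z. (1 + z + complex_of_real e0 + of_nat i)/2 \<in> \<int>\<^sub>\<le>\<^sub>0}"
    by (rule aff_bad[where k = "1/2" and c = "(1 + complex_of_real e0 + of_nat i)/2"]; simp add: field_simps)+
  have af2: "countable {z. (1 + z - complex_of_real e0 - of_nat i)/2 \<in> \<int>\<^sub>\<le>\<^sub>0}" "closed {z. (1 + z - complex_of_real e0 - of_nat i)/2 \<in> \<int>\<^sub>\<le>\<^sub>0}"
    by (rule aff_bad[where k = "1/2" and c = "(1 - complex_of_real e0 - of_nat i)/2"]; simp add: field_simps)+
  have cT: "countable T" "closed T" unfolding T_def using af1 af2 by auto
  have oT: "open (-T)" using cT by auto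
  have rok: "(complex_of_real e0 + of_nat r) / 2 \<notin> \<int>\<^sub>\<le>\<^sub>0" for r using e0 by (intro Gamma_half_ok) auto
  have hL: "(\<lambda>z. suminf (hterm z (of_real e0) ((1 + z + of_real e0 + of_nat i)/2))) holomorphic_on -T"
    by (rule holo_series[where A = "\<lambda>z. z" and E = "\<lambda>z. of_real e0" and D = "\<lambda>z. (1 + z + of_real e0 + of_nat i)/2", OF oT])
       (auto simp: T_def intro!: holomorphic_intros)
  have hR: "(\<lambda>z. R1 i z (of_real e0)) holomorphic_on -T"
    unfolding R1_def
    by (intro holomorphic_intros holomorphic_on_const holomorphic_Gamma') (auto simp: T_def rok)
  show ?thesis
  proof (rule cont_principle[OF cT hL hR, of "e0 + 1 + real i" "e0 + 2 + real i"])
    show "a \<notin> T" using a by (auto simp: T_def bad1_def)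
    fix x :: real assume x: "e0 + 1 + real i < x" "x < e0 + 2 + real i"
    have "(\<lambda>N. hterm (of_real x) (of_real e0) ((1 + of_real x + of_real e0 + of_nat i)/2) N) sums R1 i (of_real x) (of_real e0)"
      using x e0 by (intro real_base1) auto
    thus "suminf (hterm (of_real x) (of_real e0) ((1 + of_real x + of_real e0 + of_nat i)/2)) = R1 i (of_real x) (of_real e0)"
      by (rule sums_unique[symmetric])
  qed simp
qed

lemma core1:
  assumes "\<not> bad1 i a e"
  shows "suminf (hterm a e ((1 + a + e + of_nat i)/2)) = R1 i a e"
proof -
  define T where "T = {z. (1 + a + z + of_nat i)/2 \<in> \<int>\<^sub>\<le>\<^sub>0} \<union> {z. (1 + a - z - of_nat i)/2 \<in> \<int>\<^sub>\<le>\<^sub>0}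
      \<union> (\<Union>r\<in>{..i}. {z. (z + of_nat r)/2 \<in> \<int>\<^sub>\<le>\<^sub>0})"
  have af1: "countable {z. (1 + a + z + of_nat i)/2 \<in> \<int>\<^sub>\<le>\<^sub>0}" "closed {z. (1 + a + z + of_nat i)/2 \<in> \<int>\<^sub>\<le>\<^sub>0}"
    by (rule aff_bad[where k = "1/2" and c = "(1 + a + of_nat i)/2"]; simp add: field_simps)+
  have af2: "countable {z. (1 + a - z - of_nat i)/2 \<in> \<int>\<^sub>\<le>\<^sub>0}" "closed {z. (1 + a - z - of_nat i)/2 \<in> \<int>\<^sub>\<le>\<^sub>0}"
    by (rule aff_bad[where k = "-1/2" and c = "(1 + a - of_nat i)/2"]; simp add: field_simps)+
  have af3: "countable {z::complex. (z + of_nat r)/2 \<in> \<int>\<^sub>\<le>\<^sub>0}" "closed {z::complex. (z + of_nat r)/2 \<in> \<int>\<^sub>\<le>\<^sub>0}" for r :: nat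
    by (rule aff_bad[where k = "1/2" and c = "of_nat r/2"]; simp add: field_simps)+
  have cT: "countable T" "closed T" unfolding T_def using af1 af2 af3 by (auto intro!: closed_UN)
  have oT: "open (-T)" using cT by auto
  have hL: "(\<lambda>z. suminf (hterm a z ((1 + a + z + of_nat i)/2))) holomorphic_on -T"
    by (rule holo_series[where A = "\<lambda>z. a" and E = "\<lambda>z. z" and D = "\<lambda>z. (1 + a + z + of_nat i)/2", OF oT])
       (auto simp: T_def intro!: holomorphic_intros)
  have hR: "(\<lambda>z. R1 i a z) holomorphic_on -T"
    unfolding R1_def
    by (intro holomorphic_intros holomorphic_on_const holomorphic_Gamma') (auto simp: T_def)
  show ?thesis
  proof (rule cont_principle[OF cT hL hR, of 2 3])
    show "e \<notin> T" using assms by (auto simp: T_def bad1_def)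
    fix x :: real assume x: "2 < x" "x < 3" "complex_of_real x \<notin> T"
    show "suminf (hterm a (of_real x) ((1 + a + of_real x + of_nat i)/2)) = R1 i a (of_real x)"
      using x by (intro stepB1) (auto simp: T_def bad1_def)
  qed simp
qed


definition bad2 :: "nat \<Rightarrow> complex \<Rightarrow> complex \<Rightarrow> bool" where
  "bad2 i a e \<longleftrightarrow> (1 + a + e - of_nat i)/2 \<in> \<int>\<^sub>\<le>\<^sub>0
      \<or> (\<exists>r\<le>i. (e + of_nat r)/2 \<in> \<int>\<^sub>\<le>\<^sub>0)"

lemma stepB2:
  fixes e0 :: real
  assumes e0: "e0 > 2" and a: "\<not> bad2 i a (of_real e0)"
  shows "suminf (hterm a (of_real e0) ((1 + a + of_real e0 - of_nat i)/2)) = R2 i a (of_real e0)"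
proof -
  define T where "T = {z. (1 + z + complex_of_real e0 - of_nat i)/2 \<in> \<int>\<^sub>\<le>\<^sub>0}"
  have af1: "countable {z. (1 + z + complex_of_real e0 - of_nat i)/2 \<in> \<int>\<^sub>\<le>\<^sub>0}" "closed {z. (1 + z + complex_of_real e0 - of_nat i)/2 \<in> \<int>\<^sub>\<le>\<^sub>0}"
    by (rule aff_bad[where k = "1/2" and c = "(1 + complex_of_real e0 - of_nat i)/2"]; simp add: field_simps)+
  have af2: "countable {z. (1 + z - complex_of_real e0 - of_nat i)/2 \<in> \<int>\<^sub>\<le>\<^sub>0}" "closed {z. (1 + z - complex_of_real e0 - of_nat i)/2 \<in> \<int>\<^sub>\<le>\<^sub>0}"
    by (rule aff_bad[where k = "1/2" and c = "(1 - complex_of_real e0 - of_nat i)/2"]; simp add: field_simps)+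
  have cT: "countable T" "closed T" unfolding T_def using af1 af2 by auto
  have oT: "open (-T)" using cT by auto
  have rok: "(complex_of_real e0 + of_nat r) / 2 \<notin> \<int>\<^sub>\<le>\<^sub>0" for r using e0 by (intro Gamma_half_ok) auto
  have hL: "(\<lambda>z. suminf (hterm z (of_real e0) ((1 + z + of_real e0 - of_nat i)/2))) holomorphic_on -T"
    by (rule holo_series[where A = "\<lambda>z. z" and E = "\<lambda>z. of_real e0" and D = "\<lambda>z. (1 + z + of_real e0 - of_nat i)/2", OF oT])
       (auto simp: T_def intro!: holomorphic_intros)
  have hR: "(\<lambda>z. R2 i z (of_real e0)) holomorphic_on -T"
    unfolding R2_def
    by (intro holomorphic_intros holomorphic_on_const holomorphic_Gamma') (auto simp: T_def rok)
  show ?thesis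
  proof (rule cont_principle[OF cT hL hR, of "e0 + 1 + real i" "e0 + 2 + real i"])
    show "a \<notin> T" using a by (auto simp: T_def bad2_def)
    fix x :: real assume x: "e0 + 1 + real i < x" "x < e0 + 2 + real i"
    have "(\<lambda>N. hterm (of_real x) (of_real e0) ((1 + of_real x + of_real e0 - of_nat i)/2) N) sums R2 i (of_real x) (of_real e0)"
      using x e0 by (intro real_base2) auto
    thus "suminf (hterm (of_real x) (of_real e0) ((1 + of_real x + of_real e0 - of_nat i)/2)) = R2 i (of_real x) (of_real e0)"
      by (rule sums_unique[symmetric])
  qed simp
qed

lemma core2:
  assumes "\<not> bad2 i a e"
  shows "suminf (hterm a e ((1 + a + e - of_nat i)/2)) = R2 i a e"
proof -
  define T where "T = {z. (1 + a + z - of_nat i)/2 \<in> \<int>\<^sub>\<le>\<^sub>0} \<union> (\<Union>r\<in>{..i}. {z. (z + of_nat r)/2 \<in> \<int>\<^sub>\<le>\<^sub>0})"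
  have af1: "countable {z. (1 + a + z - of_nat i)/2 \<in> \<int>\<^sub>\<le>\<^sub>0}" "closed {z. (1 + a + z - of_nat i)/2 \<in> \<int>\<^sub>\<le>\<^sub>0}"
    by (rule aff_bad[where k = "1/2" and c = "(1 + a - of_nat i)/2"]; simp add: field_simps)+
  have af2: "countable {z. (1 + a - z - of_nat i)/2 \<in> \<int>\<^sub>\<le>\<^sub>0}" "closed {z. (1 + a - z - of_nat i)/2 \<in> \<int>\<^sub>\<le>\<^sub>0}"
    by (rule aff_bad[where k = "-1/2" and c = "(1 + a - of_nat i)/2"]; simp add: field_simps)+
  have af3: "countable {z::complex. (z + of_nat r)/2 \<in> \<int>\<^sub>\<le>\<^sub>0}" "closed {z::complex. (z + of_nat r)/2 \<in> \<int>\<^sub>\<le>\<^sub>0}" for r :: nat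
    by (rule aff_bad[where k = "1/2" and c = "of_nat r/2"]; simp add: field_simps)+
  have cT: "countable T" "closed T" unfolding T_def using af1 af2 af3 by (auto intro!: closed_UN)
  have oT: "open (-T)" using cT by auto
  have hL: "(\<lambda>z. suminf (hterm a z ((1 + a + z - of_nat i)/2))) holomorphic_on -T"
    by (rule holo_series[where A = "\<lambda>z. a" and E = "\<lambda>z. z" and D = "\<lambda>z. (1 + a + z - of_nat i)/2", OF oT])
       (auto simp: T_def intro!: holomorphic_intros)
  have hR: "(\<lambda>z. R2 i a z) holomorphic_on -T"
    unfolding R2_def
    by (intro holomorphic_intros holomorphic_on_const holomorphic_Gamma') (auto simp: T_def)
  show ?thesis
  proof (rule cont_principle[OF cT hL hR, of 2 3])
    show "e \<notin> T" using assms by (auto simp: T_def bad2_def)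
    fix x :: real assume x: "2 < x" "x < 3" "complex_of_real x \<notin> T"
    show "suminf (hterm a (of_real x) ((1 + a + of_real x - of_nat i)/2)) = R2 i a (of_real x)"
      using x by (intro stepB2) (auto simp: T_def bad2_def)
  qed simp
qed

lemma saal_poly:
  fixes b c \<epsilon> :: complex
  shows "(\<Sum>n\<le>N. of_nat (N choose n) * pochhammer \<epsilon> (N-n) * pochhammer b n * pochhammer c n
            * pochhammer (c+b+\<epsilon>+ of_nat n) (N-n)) = pochhammer (c+\<epsilon>) N * pochhammer (b+\<epsilon>) N"
proof -
  define G where "G = (\<lambda>n m. of_nat (N choose n) * of_nat ((N-n) choose (m-n)) * pochhammer \<epsilon> (N-n)
      * pochhammer b n * pochhammer c m * pochhammer (b+\<epsilon>) (N-m) :: complex)"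
  have step1: "of_nat (N choose n) * pochhammer \<epsilon> (N-n) * pochhammer b n * pochhammer c n
            * pochhammer (c+b+\<epsilon>+ of_nat n) (N-n) = (\<Sum>k\<le>N-n. G n (n+k))" if "n \<le> N" for n
  proof -
    have "pochhammer (c+b+\<epsilon>+ of_nat n) (N-n) = pochhammer ((c + of_nat n) + (b+\<epsilon>)) (N-n)"
      by (simp add: algebra_simps)
    also have "\<dots> = (\<Sum>k\<le>N-n. of_nat ((N-n) choose k) * pochhammer (c + of_nat n) k * pochhammer (b+\<epsilon>) (N-n-k))"
      by (rule pochhammer_binomial_sum)
    finally have "of_nat (N choose n) * pochhammer \<epsilon> (N-n) * pochhammer b n * pochhammer c n
            * pochhammer (c+b+\<epsilon>+ of_nat n) (N-n) = (\<Sum>k\<le>N-n. of_nat (N choose n) * pochhammer \<epsilon> (N-n) * pochhammer b n *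
               (of_nat ((N-n) choose k) * (pochhammer c n * pochhammer (c + of_nat n) k) * pochhammer (b+\<epsilon>) (N-n-k)))"
      by (simp add: sum_distrib_left mult_ac)
    also have "\<dots> = (\<Sum>k\<le>N-n. G n (n+k))"
      by (intro sum.cong refl) (simp add: G_def pochhammer_product' mult_ac)
    finally show ?thesis .
  qed
  have "(\<Sum>n\<le>N. of_nat (N choose n) * pochhammer \<epsilon> (N-n) * pochhammer b n * pochhammer c n
            * pochhammer (c+b+\<epsilon>+ of_nat n) (N-n)) = (\<Sum>n\<le>N. \<Sum>k\<le>N-n. G n (n+k))"
    by (intro sum.cong refl step1) auto
  also have "\<dots> = (\<Sum>(n,k)\<in>Sigma {..N} (\<lambda>n. {..N-n}). G n (n+k))"
    by (rule sum.Sigma) auto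
  also have "\<dots> = (\<Sum>(m,n)\<in>Sigma {..N} (\<lambda>m. {..m}). G n m)"
    by (rule sum.reindex_bij_witness[where j="\<lambda>(n,k). (n+k, n)" and i="\<lambda>(m,n). (n, m-n)"]) auto
  also have "\<dots> = (\<Sum>m\<le>N. \<Sum>n\<le>m. G n m)"
    by (rule sum.Sigma[symmetric]) auto
  also have "\<dots> = (\<Sum>m\<le>N. of_nat (N choose m) * pochhammer c m * pochhammer \<epsilon> (N-m) * pochhammer (b+\<epsilon>) (N-m) *
        (\<Sum>n\<le>m. of_nat (m choose n) * pochhammer b n * pochhammer (\<epsilon> + of_nat (N-m)) (m-n)))"
  proof (intro sum.cong refl)
    fix m assume m: "m \<in> {..N}"
    show "(\<Sum>n\<le>m. G n m) = of_nat (N choose m) * pochhammer c m * pochhammer \<epsilon> (N-m) * pochhammer (b+\<epsilon>) (N-m) *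
        (\<Sum>n\<le>m. of_nat (m choose n) * pochhammer b n * pochhammer (\<epsilon> + of_nat (N-m)) (m-n))"
      unfolding sum_distrib_left
    proof (intro sum.cong refl)
      fix n assume n: "n \<in> {..m}"
      have ch: "(N choose n) * ((N-n) choose (m-n)) = (N choose m) * (m choose n)"
        using choose_mult[of n m N] m n by simp
      have ch': "of_nat (N choose n) * of_nat ((N-n) choose (m-n)) = (of_nat (N choose m) * of_nat (m choose n) :: complex)"
        using arg_cong[OF ch, of "of_nat :: nat \<Rightarrow> complex"] by simp
      have p: "pochhammer \<epsilon> (N-n) = pochhammer \<epsilon> (N-m) * pochhammer (\<epsilon> + of_nat (N-m)) (m-n)"
        using pochhammer_product[of "N-m" "N-n" \<epsilon>] m n by auto
      show "G n m = of_nat (N choose m) * pochhammer c m * pochhammer \<epsilon> (N-m) * pochhammer (b+\<epsilon>) (N-m) *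
          (of_nat (m choose n) * pochhammer b n * pochhammer (\<epsilon> + of_nat (N-m)) (m-n))"
        unfolding G_def p using ch' by (simp add: mult_ac)
    qed
  qed
  also have "\<dots> = (\<Sum>m\<le>N. of_nat (N choose m) * pochhammer c m * pochhammer \<epsilon> (N-m) * pochhammer (b+\<epsilon>) N)"
  proof (intro sum.cong refl)
    fix m assume m: "m \<in> {..N}"
    have "(\<Sum>n\<le>m. of_nat (m choose n) * pochhammer b n * pochhammer (\<epsilon> + of_nat (N-m)) (m-n))
          = pochhammer (b + (\<epsilon> + of_nat (N-m))) m"
      by (rule pochhammer_binomial_sum[symmetric])
    moreover have "pochhammer (b+\<epsilon>) (N-m) * pochhammer (b + (\<epsilon> + of_nat (N-m))) m = pochhammer (b+\<epsilon>) N"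
      using pochhammer_product'[of "b+\<epsilon>" "N-m" m] m by (simp add: add_ac)
    ultimately show "of_nat (N choose m) * pochhammer c m * pochhammer \<epsilon> (N-m) * pochhammer (b+\<epsilon>) (N-m) *
        (\<Sum>n\<le>m. of_nat (m choose n) * pochhammer b n * pochhammer (\<epsilon> + of_nat (N-m)) (m-n))
        = of_nat (N choose m) * pochhammer c m * pochhammer \<epsilon> (N-m) * pochhammer (b+\<epsilon>) N"
      by (metis mult.assoc)
  qed
  also have "\<dots> = pochhammer (c+\<epsilon>) N * pochhammer (b+\<epsilon>) N"
    by (simp add: pochhammer_binomial_sum sum_distrib_right)
  finally show ?thesis .
qed

lemma saal_div:
  fixes b c \<epsilon> d :: complex
  assumes d: "d \<notin> \<int>\<^sub>\<le>\<^sub>0" and cd: "d = c + b + \<epsilon>"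
  shows "(\<Sum>n\<le>N. of_nat (N choose n) * pochhammer \<epsilon> (N-n) * pochhammer b n * pochhammer c n / pochhammer d n)
        = pochhammer (c+\<epsilon>) N * pochhammer (b+\<epsilon>) N / pochhammer d N"
proof -
  have pz: "pochhammer d n \<noteq> 0" for n using d by (auto simp: pochhammer_eq_0_iff)
  have "(\<Sum>n\<le>N. of_nat (N choose n) * pochhammer \<epsilon> (N-n) * pochhammer b n * pochhammer c n / pochhammer d n)
      = (\<Sum>n\<le>N. of_nat (N choose n) * pochhammer \<epsilon> (N-n) * pochhammer b n * pochhammer c n
            * pochhammer (c+b+\<epsilon>+ of_nat n) (N-n)) / pochhammer d N"
    unfolding sum_divide_distrib
  proof (intro sum.cong refl)
    fix n assume n: "n \<in> {..N}"
    have "pochhammer d N = pochhammer d n * pochhammer (d + of_nat n) (N - n)"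
      using n by (intro pochhammer_product) auto
    thus "of_nat (N choose n) * pochhammer \<epsilon> (N-n) * pochhammer b n * pochhammer c n / pochhammer d n =
        of_nat (N choose n) * pochhammer \<epsilon> (N-n) * pochhammer b n * pochhammer c n
            * pochhammer (c+b+\<epsilon>+ of_nat n) (N-n) / pochhammer d N"
      using pz[of n] pz[of N] by (simp add: cd field_simps)
  qed
  also have "\<dots> = pochhammer (c+\<epsilon>) N * pochhammer (b+\<epsilon>) N / pochhammer d N"
    by (simp only: saal_poly)
  finally show ?thesis .
qed

lemma kdf_term_eval:
  "kdf_term [\<alpha>] [\<beta>] [\<epsilon>] [] [b, c] [d] x y (m, n) =
     pochhammer \<alpha> (m+n) * pochhammer \<epsilon> m * (pochhammer b n * pochhammer c n)
     / (pochhammer \<beta> (m+n) * pochhammer d n) * (x^m / fact m) * (y^n / fact n)"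
  by (simp add: kdf_term_def)

lemma inner_sum:
  fixes \<alpha> \<beta> \<epsilon> c d e :: complex
  assumes \<beta>: "\<beta> \<notin> \<int>\<^sub>\<le>\<^sub>0" and d: "d \<notin> \<int>\<^sub>\<le>\<^sub>0" and cd: "c = d - \<beta>" and ed: "e = d - \<beta> + \<epsilon>"
  shows "(\<Sum>n\<le>N. kdf_term [\<alpha>] [\<beta>] [\<epsilon>] [] [\<beta> - \<epsilon>, c] [d] (1/2) (1/2) (N-n, n)) = hterm \<alpha> e d N"
proof -
  have pb: "pochhammer \<beta> N \<noteq> 0" using \<beta> by (auto simp: pochhammer_eq_0_iff)
  have pd: "pochhammer d N \<noteq> 0" using d by (auto simp: pochhammer_eq_0_iff)
  have S: "(\<Sum>n\<le>N. of_nat (N choose n) * pochhammer \<epsilon> (N-n) * pochhammer (\<beta> - \<epsilon>) n * pochhammer c n / pochhammer d n)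
        = pochhammer e N * pochhammer \<beta> N / pochhammer d N"
    using saal_div[OF d, of c "\<beta> - \<epsilon>" \<epsilon> N] by (simp add: cd ed)
  have "(\<Sum>n\<le>N. kdf_term [\<alpha>] [\<beta>] [\<epsilon>] [] [\<beta> - \<epsilon>, c] [d] (1/2) (1/2) (N-n, n))
     = (\<Sum>n\<le>N. pochhammer \<alpha> N / pochhammer \<beta> N * (1/2)^N / fact N *
          (of_nat (N choose n) * pochhammer \<epsilon> (N-n) * pochhammer (\<beta> - \<epsilon>) n * pochhammer c n / pochhammer d n))"
  proof (intro sum.cong refl)
    fix n assume n: "n \<in> {..N}"
    have mn: "N - n + n = N" using n by simp
    have f0: "fact n * fact (N-n) * (N choose n) = fact N" using binomial_fact_lemma[of n N] n by simp
    have f1: "(of_nat (fact N) :: complex) = of_nat (fact n * fact (N-n) * (N choose n))" using f0 by simp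
    have f: "fact N = (fact (N-n) * fact n :: complex) * of_nat (N choose n)"
      using f1 unfolding of_nat_mult of_nat_fact by (simp add: mult_ac)
    have ch: "of_nat (N choose n) \<noteq> (0::complex)" using n by simp
    have h: "(1/2::complex)^(N-n) * (1/2)^n = (1/2)^N"
      using n by (simp flip: power_add)
    show "kdf_term [\<alpha>] [\<beta>] [\<epsilon>] [] [\<beta> - \<epsilon>, c] [d] (1/2) (1/2) (N-n, n) =
       pochhammer \<alpha> N / pochhammer \<beta> N * (1/2)^N / fact N *
          (of_nat (N choose n) * pochhammer \<epsilon> (N-n) * pochhammer (\<beta> - \<epsilon>) n * pochhammer c n / pochhammer d n)"
      unfolding kdf_term_eval mn f h[symmetric] using ch
      by (simp add: field_simps)
  qed
  also have "\<dots> = pochhammer \<alpha> N / pochhammer \<beta> N * (1/2)^N / fact N * (pochhammer e N * pochhammer \<beta> N / pochhammer d N)"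
    by (simp only: sum_distrib_left[symmetric] S)
  also have "\<dots> = hterm \<alpha> e d N"
    unfolding hterm_def using pb pd by (simp add: field_simps)
  finally show ?thesis .
qed

lemma kdf_reduce:
  fixes \<alpha> \<beta> \<epsilon> c d e :: complex
  assumes sm: "kdf_term [\<alpha>] [\<beta>] [\<epsilon>] [] [\<beta> - \<epsilon>, c] [d] (1/2) (1/2) summable_on UNIV"
    and \<beta>: "\<beta> \<notin> \<int>\<^sub>\<le>\<^sub>0" and d: "d \<notin> \<int>\<^sub>\<le>\<^sub>0" and cd: "c = d - \<beta>" and ed: "e = d - \<beta> + \<epsilon>"
  shows "kdf [\<alpha>] [\<beta>] [\<epsilon>] [] [\<beta> - \<epsilon>, c] [d] (1/2) (1/2) = suminf (hterm \<alpha> e d)"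
proof -
  define F where "F = kdf_term [\<alpha>] [\<beta>] [\<epsilon>] [] [\<beta> - \<epsilon>, c] [d] (1/2) (1/2)"
  define K where "K = kdf [\<alpha>] [\<beta>] [\<epsilon>] [] [\<beta> - \<epsilon>, c] [d] (1/2) (1/2)"
  have H: "(F has_sum K) UNIV" using sm unfolding F_def K_def kdf_def by (simp add: summable_iff_has_sum_infsum)
  have bij: "bij_betw (\<lambda>(N, n). (N - n, n)) (Sigma UNIV (\<lambda>N. {..N})) (UNIV :: (nat \<times> nat) set)"
    by (rule bij_betwI[where g = "\<lambda>(m, n). (m + n, n)"]) auto
  have H2: "((\<lambda>x. F ((\<lambda>(N, n). (N - n, n)) x)) has_sum K) (Sigma UNIV (\<lambda>N. {..N}))"
    using has_sum_reindex_bij_betw[OF bij, of F K] H by simp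
  have H3: "((\<lambda>N. \<Sum>n\<le>N. F (N - n, n)) has_sum K) UNIV"
    by (rule has_sum_SigmaD[OF H2]) (auto intro: has_sum_finiteI)
  have "(\<Sum>n\<le>N. F (N - n, n)) = hterm \<alpha> e d N" for N
    unfolding F_def by (rule inner_sum[OF \<beta> d cd ed])
  with H3 have "hterm \<alpha> e d sums K" by (auto dest: has_sum_imp_sums)
  thus ?thesis unfolding K_def by (simp add: sums_iff)
qed

theorem theorem2:
  fixes i :: nat and \<alpha> \<beta> \<epsilon> :: complex
  shows
   "(kdf_term [\<alpha>] [\<beta>] [\<epsilon>] [] [\<beta> - \<epsilon>, 1 + \<alpha> - 2*\<beta> + \<epsilon> + of_nat i]
        [1 + \<alpha> - \<beta> + \<epsilon> + of_nat i] (1/2) (1/2) summable_on UNIV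
     \<and> \<beta> \<notin> \<int>\<^sub>\<le>\<^sub>0 \<and> 1 + \<alpha> - \<beta> + \<epsilon> + of_nat i \<notin> \<int>\<^sub>\<le>\<^sub>0
     \<and> \<beta> - \<epsilon> - of_nat i \<notin> \<int>\<^sub>\<le>\<^sub>0 \<and> \<beta> - \<epsilon> \<notin> \<int>\<^sub>\<le>\<^sub>0
     \<and> 1 + \<alpha> - 2*\<beta> + 2*\<epsilon> + of_nat i \<notin> \<int>\<^sub>\<le>\<^sub>0
     \<and> (\<forall>r\<le>i. \<epsilon> - \<beta> + (1 + \<alpha> + of_nat i + of_nat r) / 2 \<notin> \<int>\<^sub>\<le>\<^sub>0
              \<and> (1 + \<alpha> - of_nat i + of_nat r) / 2 \<notin> \<int>\<^sub>\<le>\<^sub>0)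
     \<longrightarrow>
     kdf [\<alpha>] [\<beta>] [\<epsilon>] [] [\<beta> - \<epsilon>, 1 + \<alpha> - 2*\<beta> + \<epsilon> + of_nat i]
        [1 + \<alpha> - \<beta> + \<epsilon> + of_nat i] (1/2) (1/2)
     = (2::complex) powr (of_nat i + \<alpha> - 2*\<beta> + 2*\<epsilon>)
         * Gamma (\<beta> - \<epsilon> - of_nat i) * Gamma (1 + \<alpha> - \<beta> + \<epsilon> + of_nat i)
         / (Gamma (\<beta> - \<epsilon>) * Gamma (1 + \<alpha> - 2*\<beta> + 2*\<epsilon> + of_nat i))
         * (\<Sum>r=0..i. (-1)^r * of_nat (i choose r)
              * Gamma (\<epsilon> - \<beta> + (1 + \<alpha> + of_nat i + of_nat r) / 2)
              / Gamma ((1 + \<alpha> - of_nat i + of_nat r) / 2)))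
   \<and>
   (kdf_term [\<alpha>] [\<beta>] [\<epsilon>] [] [\<beta> - \<epsilon>, 1 + \<alpha> - 2*\<beta> + \<epsilon> - of_nat i]
        [1 + \<alpha> - \<beta> + \<epsilon> - of_nat i] (1/2) (1/2) summable_on UNIV
     \<and> \<beta> \<notin> \<int>\<^sub>\<le>\<^sub>0 \<and> 1 + \<alpha> - \<beta> + \<epsilon> - of_nat i \<notin> \<int>\<^sub>\<le>\<^sub>0
     \<and> 1 + \<alpha> - 2*\<beta> + 2*\<epsilon> - of_nat i \<notin> \<int>\<^sub>\<le>\<^sub>0
     \<and> (\<forall>r\<le>i. \<epsilon> - \<beta> + (1 + \<alpha> - of_nat i + of_nat r) / 2 \<notin> \<int>\<^sub>\<le>\<^sub>0
              \<and> (1 + \<alpha> - of_nat i + of_nat r) / 2 \<notin> \<int>\<^sub>\<le>\<^sub>0)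
     \<longrightarrow>
     kdf [\<alpha>] [\<beta>] [\<epsilon>] [] [\<beta> - \<epsilon>, 1 + \<alpha> - 2*\<beta> + \<epsilon> - of_nat i]
        [1 + \<alpha> - \<beta> + \<epsilon> - of_nat i] (1/2) (1/2)
     = (2::complex) powr (- of_nat i + \<alpha> - 2*\<beta> + 2*\<epsilon>)
         * Gamma (1 + \<alpha> - \<beta> + \<epsilon> - of_nat i)
         / Gamma (1 + \<alpha> - 2*\<beta> + 2*\<epsilon> - of_nat i)
         * (\<Sum>r=0..i. of_nat (i choose r)
              * Gamma (\<epsilon> - \<beta> + (1 + \<alpha> - of_nat i + of_nat r) / 2)
              / Gamma ((1 + \<alpha> - of_nat i + of_nat r) / 2)))"
proof (intro conjI impI, goal_cases)
  case 1
  from 1 have sm: "kdf_term [\<alpha>] [\<beta>] [\<epsilon>] [] [\<beta> - \<epsilon>, 1 + \<alpha> - 2*\<beta> + \<epsilon> + of_nat i]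
        [1 + \<alpha> - \<beta> + \<epsilon> + of_nat i] (1/2) (1/2) summable_on UNIV" by blast
  from 1 have hb: "\<beta> \<notin> \<int>\<^sub>\<le>\<^sub>0" and hd: "1 + \<alpha> - \<beta> + \<epsilon> + of_nat i \<notin> \<int>\<^sub>\<le>\<^sub>0"
    and h3: "\<beta> - \<epsilon> - of_nat i \<notin> \<int>\<^sub>\<le>\<^sub>0"
    and hr: "\<And>r. r \<le> i \<Longrightarrow> \<epsilon> - \<beta> + (1 + \<alpha> + of_nat i + of_nat r) / 2 \<notin> \<int>\<^sub>\<le>\<^sub>0" by blast+
  define d where "d = 1 + \<alpha> - \<beta> + \<epsilon> + of_nat i"
  define e where "e = 1 + \<alpha> - 2*\<beta> + 2*\<epsilon> + of_nat i"
  have K: "kdf [\<alpha>] [\<beta>] [\<epsilon>] [] [\<beta> - \<epsilon>, 1 + \<alpha> - 2*\<beta> + \<epsilon> + of_nat i]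
        [1 + \<alpha> - \<beta> + \<epsilon> + of_nat i] (1/2) (1/2) = suminf (hterm \<alpha> e d)"
    unfolding d_def by (rule kdf_reduce[OF sm hb hd]) (simp_all add: e_def algebra_simps)
  have q1: "(1 + \<alpha> + e + of_nat i)/2 = d" by (simp add: e_def d_def field_simps)
  have q2: "(1 + \<alpha> - e - of_nat i)/2 = \<beta> - \<epsilon> - of_nat i" by (simp add: e_def field_simps)
  have q3: "(e + of_nat r)/2 = \<epsilon> - \<beta> + (1 + \<alpha> + of_nat i + of_nat r) / 2" for r :: nat
    by (simp add: e_def field_simps)
  have q4: "(1 + \<alpha> - e + of_nat i)/2 = \<beta> - \<epsilon>" by (simp add: e_def field_simps)
  have q5: "e - 1 = of_nat i + \<alpha> - 2*\<beta> + 2*\<epsilon>" by (simp add: e_def)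
  have nb: "\<not> bad1 i \<alpha> e"
    unfolding bad1_def q1 q2 q3 using hd h3 hr unfolding d_def by auto
  have C: "suminf (hterm \<alpha> e ((1 + \<alpha> + e + of_nat i)/2)) = R1 i \<alpha> e" by (rule core1[OF nb])
  have "R1 i \<alpha> e = (2::complex) powr (of_nat i + \<alpha> - 2*\<beta> + 2*\<epsilon>)
         * Gamma (\<beta> - \<epsilon> - of_nat i) * Gamma (1 + \<alpha> - \<beta> + \<epsilon> + of_nat i)
         / (Gamma (\<beta> - \<epsilon>) * Gamma (1 + \<alpha> - 2*\<beta> + 2*\<epsilon> + of_nat i))
         * (\<Sum>r=0..i. (-1)^r * of_nat (i choose r)
              * Gamma (\<epsilon> - \<beta> + (1 + \<alpha> + of_nat i + of_nat r) / 2)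
              / Gamma ((1 + \<alpha> - of_nat i + of_nat r) / 2))"
    unfolding R1_def q1 q2 q3 q4 q5 rGamma_inverse_Gamma
    by (simp add: d_def e_def atLeast0AtMost inverse_eq_divide mult_ac)
  with K C q1 show ?case by simp
next
  case 2
  from 2 have sm: "kdf_term [\<alpha>] [\<beta>] [\<epsilon>] [] [\<beta> - \<epsilon>, 1 + \<alpha> - 2*\<beta> + \<epsilon> - of_nat i]
        [1 + \<alpha> - \<beta> + \<epsilon> - of_nat i] (1/2) (1/2) summable_on UNIV" by blast
  from 2 have hb: "\<beta> \<notin> \<int>\<^sub>\<le>\<^sub>0" and hd: "1 + \<alpha> - \<beta> + \<epsilon> - of_nat i \<notin> \<int>\<^sub>\<le>\<^sub>0"
    and hr: "\<And>r. r \<le> i \<Longrightarrow> \<epsilon> - \<beta> + (1 + \<alpha> - of_nat i + of_nat r) / 2 \<notin> \<int>\<^sub>\<le>\<^sub>0" by blast+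
  define d where "d = 1 + \<alpha> - \<beta> + \<epsilon> - of_nat i"
  define e where "e = 1 + \<alpha> - 2*\<beta> + 2*\<epsilon> - of_nat i"
  have K: "kdf [\<alpha>] [\<beta>] [\<epsilon>] [] [\<beta> - \<epsilon>, 1 + \<alpha> - 2*\<beta> + \<epsilon> - of_nat i]
        [1 + \<alpha> - \<beta> + \<epsilon> - of_nat i] (1/2) (1/2) = suminf (hterm \<alpha> e d)"
    unfolding d_def by (rule kdf_reduce[OF sm hb hd]) (simp_all add: e_def algebra_simps)
  have q1: "(1 + \<alpha> + e - of_nat i)/2 = d" by (simp add: e_def d_def field_simps)
  have q3: "(e + of_nat r)/2 = \<epsilon> - \<beta> + (1 + \<alpha> - of_nat i + of_nat r) / 2" for r :: nat
    by (simp add: e_def field_simps)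
  have q5: "e - 1 = - of_nat i + \<alpha> - 2*\<beta> + 2*\<epsilon>" by (simp add: e_def)
  have nb: "\<not> bad2 i \<alpha> e"
    unfolding bad2_def q1 q3 using hd hr unfolding d_def by auto
  have C: "suminf (hterm \<alpha> e ((1 + \<alpha> + e - of_nat i)/2)) = R2 i \<alpha> e" by (rule core2[OF nb])
  have "R2 i \<alpha> e = (2::complex) powr (- of_nat i + \<alpha> - 2*\<beta> + 2*\<epsilon>)
         * Gamma (1 + \<alpha> - \<beta> + \<epsilon> - of_nat i)
         / Gamma (1 + \<alpha> - 2*\<beta> + 2*\<epsilon> - of_nat i)
         * (\<Sum>r=0..i. of_nat (i choose r)
              * Gamma (\<epsilon> - \<beta> + (1 + \<alpha> - of_nat i + of_nat r) / 2)
              / Gamma ((1 + \<alpha> - of_nat i + of_nat r) / 2))"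
    unfolding R2_def q1 q3 q5 rGamma_inverse_Gamma
    by (simp add: d_def e_def atLeast0AtMost inverse_eq_divide mult_ac)
  with K C q1 show ?case by simp
qed

end
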